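(* For $\tau\in P\Lambda^{n-k,k}$ the map $\Psi_\tau(f)[B]=D(f)[1_{\pi^{-1}(B)}\tau] $ is given for $f\in\mathrm{Conv}(\mathbb{R}^n,\mathbb{R})\cap C^2(\mathbb{R}^n)$ by \begin{align*} \Psi_\tau(f)[B]=\int_{B}P_\tau(D^2f(x))d\mathrm{vol}_n(x)\quad\text{for all bounded Borel sets } B\subset\mathbb{R}^n. \end{align*}
   Context: $\mathrm{Conv}(\mathbb{R}^n,\mathbb{R})$ denotes the finite-valued convex functions on $\mathbb{R}^n$. $P\Lambda^{n-k,k}$ is the space of constant complex forms in $\Lambda^{n-k}\mathbb{R}^n\otimes\Lambda^k(\mathbb{R}^n)^*$ on $T^*\mathbb{R}^n=\mathbb{R}^n\times(\mathbb{R}^n)^*$ that are primitive ($\omega_s\wedge\tau=0$ for the symplectic form $\omega_s$); $\pi$ is the projection onto the first factor and $D(f)$ Fu's differential cycle. Extending $\tau$ $\mathbb{C}$-linearly to a constant holomorphic form on $\mathbb{C}^n\times(\mathbb{C}^n)^*$, $P_\tau$ is the polynomial on complex symmetric $(n\times n)$-matrices defined by $F_Q^*\tau=P_\tau(Q)dz_1\wedge\dots\wedge dz_n$, where $F_Q(z)=(z,z^TQ)$. *)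

theory Defs
  imports "HOL-Analysis.Analysis"
begin

text \<open>Constant forms of degree n on T*R^n = R^n x (R^n)^* (both identified with real^'n),
  n = CARD('n), are represented as complex-valued functions of n-tuples of tangent vectors,
  the tuples being indexed by 'n.\<close>

type_synonym 'n form = "('n \<Rightarrow> ((real^'n) \<times> (real^'n))) \<Rightarrow> complex"

definition wedge1 :: "('i::finite \<Rightarrow> ('v \<Rightarrow> real)) \<Rightarrow> ('i \<Rightarrow> 'v) \<Rightarrow> real" where
  "wedge1 \<alpha> v = det (\<chi> a b. \<alpha> a (v b))"

definition xcov :: "((real^'n) \<times> (real^'n) \<Rightarrow> real) \<Rightarrow> bool" where
  "xcov a \<longleftrightarrow> linear a \<and> (\<forall>x y. a (x, y) = a (x, 0))"

definition ycov :: "((real^'n) \<times> (real^'n) \<Rightarrow> real) \<Rightarrow> bool" where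
  "ycov a \<longleftrightarrow> linear a \<and> (\<forall>x y. a (x, y) = a (0, y))"

text \<open>A family of n real 1-forms, k of them on the second factor and n-k on the first one;
  their wedge is a decomposable form in Lambda^{n-k,k}.\<close>
definition bideg_family :: "nat \<Rightarrow> ('n::finite \<Rightarrow> ((real^'n) \<times> (real^'n) \<Rightarrow> real)) \<Rightarrow> bool" where
  "bideg_family k \<alpha> \<longleftrightarrow> (\<exists>K. card K = k \<and> (\<forall>c\<in>K. ycov (\<alpha> c)) \<and> (\<forall>c. c \<notin> K \<longrightarrow> xcov (\<alpha> c)))"

text \<open>The family dx_i, dy_i, alpha_1, ..., alpha_n; its wedge is dx_i wedge dy_i wedge alpha.\<close>
definition sympl_ext :: "'n \<Rightarrow> ('n \<Rightarrow> ((real^'n) \<times> (real^'n) \<Rightarrow> real))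
    \<Rightarrow> 'n option option \<Rightarrow> ((real^'n) \<times> (real^'n) \<Rightarrow> real)" where
  "sympl_ext i \<alpha> a = (case a of None \<Rightarrow> (\<lambda>(x, y). x $ i)
                                | Some None \<Rightarrow> (\<lambda>(x, y). y $ i)
                                | Some (Some c) \<Rightarrow> \<alpha> c)"

text \<open>P Lambda^{n-k,k}: complex linear combinations of decomposable forms of bidegree (n-k,k)
  such that omega_s wedge tau = 0, where omega_s = sum_i dx_i wedge dy_i.\<close>
definition PLambda :: "nat \<Rightarrow> ('n::finite) form \<Rightarrow> bool" where
  "PLambda k \<tau> \<longleftrightarrow> (\<exists>(F :: nat set) (c :: nat \<Rightarrow> complex) \<alpha>.
      finite F \<and> (\<forall>j\<in>F. bideg_family k (\<alpha> j)) \<and>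
      \<tau> = (\<lambda>v. \<Sum>j\<in>F. c j * complex_of_real (wedge1 (\<alpha> j) v)) \<and>
      (\<forall>w. (\<Sum>j\<in>F. c j * complex_of_real (\<Sum>i\<in>UNIV. wedge1 (sympl_ext i (\<alpha> j)) w)) = 0))"

text \<open>C-linear (multilinear) extension of tau to complex tangent vectors.\<close>
definition form_C :: "('n::finite) form \<Rightarrow> ('n \<Rightarrow> ((complex^'n) \<times> (complex^'n))) \<Rightarrow> complex" where
  "form_C \<tau> w = (\<Sum>S\<in>(UNIV :: 'n set set). \<i> ^ card S *
      \<tau> (\<lambda>c. if c \<in> S then ((\<chi> j. Im (fst (w c) $ j)), (\<chi> j. Im (snd (w c) $ j)))
               else ((\<chi> j. Re (fst (w c) $ j)), (\<chi> j. Re (snd (w c) $ j)))))"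

text \<open>P_tau(Q): F_Q^* tau = P_tau(Q) dz_1 ... dz_n with F_Q(z) = (z, z^T Q).\<close>
definition P_tau :: "('n::finite) form \<Rightarrow> complex^'n^'n \<Rightarrow> complex" where
  "P_tau \<tau> Q = form_C \<tau> (\<lambda>c. (axis c 1, axis c 1 v* Q))"

text \<open>Subgradient, and the resolvent (I + subdifferential)^{-1} of a convex function.\<close>
definition subgrad :: "(real^'n \<Rightarrow> real) \<Rightarrow> real^'n \<Rightarrow> real^'n \<Rightarrow> bool" where
  "subgrad f x y \<longleftrightarrow> (\<forall>z. f x + y \<bullet> (z - x) \<le> f z)"

definition resolv :: "(real^'n \<Rightarrow> real) \<Rightarrow> real^'n \<Rightarrow> real^'n" where
  "resolv f u = (THE x. subgrad f x (u - x))"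

definition jac_ae :: "(real^'n \<Rightarrow> real^'n) \<Rightarrow> real^'n \<Rightarrow> real^'n^'n" where
  "jac_ae g u = (if g differentiable (at u) then jacobian g (at u) else 0)"

text \<open>Fu's differential cycle D(f) of a convex f is the integration current over the graph
  {(x,y). y in subdiff f x} of the subdifferential, oriented by the projection to the
  x-space; we parametrise it (Minty) by u |-> (J u, u - J u), J = resolv f (Lipschitz).
  This is D(f)[1_{pi^{-1}(B)} tau].\<close>
definition Dcycle :: "(real^'n::finite \<Rightarrow> real) \<Rightarrow> 'n form \<Rightarrow> (real^'n) set \<Rightarrow> complex" where
  "Dcycle f \<tau> B = integral\<^sup>L lborel (\<lambda>u. indicator B (resolv f u) *
      \<tau> (\<lambda>c. (jac_ae (resolv f) u *v axis c 1, (mat 1 - jac_ae (resolv f) u) *v axis c 1)))"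

definition Psi :: "'n form \<Rightarrow> (real^'n::finite \<Rightarrow> real) \<Rightarrow> (real^'n) set \<Rightarrow> complex" where
  "Psi \<tau> f B = Dcycle f \<tau> B"

end

theory Submission
  imports Defs
begin

typedef 'a wo = "UNIV :: 'a set" by simp

instance wo :: (finite) finite
proof
  have "(UNIV :: 'a wo set) = Abs_wo ` UNIV"
    by (metis Abs_wo_cases surj_def)
  then show "finite (UNIV :: 'a wo set)" by (metis finite_imageI finite)
qed

instantiation wo :: (finite) wellorder
begin
definition less_eq_wo :: "'a wo \<Rightarrow> 'a wo \<Rightarrow> bool" where
  "less_eq_wo x y \<longleftrightarrow> to_nat (Rep_wo x) \<le> to_nat (Rep_wo y)"
definition less_wo :: "'a wo \<Rightarrow> 'a wo \<Rightarrow> bool" where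
  "less_wo x y \<longleftrightarrow> to_nat (Rep_wo x) < to_nat (Rep_wo y)"
instance
proof
  fix x y z :: "'a wo"
  show "(x < y) = (x \<le> y \<and> \<not> y \<le> x)" by (auto simp: less_eq_wo_def less_wo_def)
  show "x \<le> x" by (auto simp: less_eq_wo_def)
  show "x \<le> y \<Longrightarrow> y \<le> z \<Longrightarrow> x \<le> z" by (auto simp: less_eq_wo_def)
  show "x \<le> y \<Longrightarrow> y \<le> x \<Longrightarrow> x = y"
    by (auto simp: less_eq_wo_def Rep_wo_inject[symmetric])
  show "x \<le> y \<or> y \<le> x" by (auto simp: less_eq_wo_def)
next
  fix P :: "'a wo \<Rightarrow> bool" and a :: "'a wo"
  assume H: "\<And>x. (\<And>y. y < x \<Longrightarrow> P y) \<Longrightarrow> P x"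
  show "P a"
  proof (induction "to_nat (Rep_wo a)" arbitrary: a rule: less_induct)
    case less
    then show ?case using H by (auto simp: less_wo_def)
  qed
qed
end



lemma prod_Basis_cart: "(\<Prod>b\<in>Basis. (x::real^'n::finite) \<bullet> b) = (\<Prod>i\<in>UNIV. x $ i)"
  by (simp add: Basis_vec_def cart_eq_inner_axis axis_eq_axis prod.UNION_disjoint)

definition vT :: "real^'n::finite \<Rightarrow> real^('n wo)" where "vT x = (\<chi> i. x $ Rep_wo i)"
definition vT' :: "real^('n::finite wo) \<Rightarrow> real^'n" where "vT' y = (\<chi> j. y $ Abs_wo j)"

lemma vT_vT' [simp]: "vT (vT' y) = y" by (simp add: vT_def vT'_def Rep_wo_inverse vec_eq_iff)
lemma vT'_vT [simp]: "vT' (vT x) = x" by (simp add: vT_def vT'_def Abs_wo_inverse vec_eq_iff)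
lemma vT_nth [simp]: "vT x $ i = x $ Rep_wo i" by (simp add: vT_def)
lemma vT'_nth [simp]: "vT' y $ j = y $ Abs_wo j" by (simp add: vT'_def)

lemma linear_vT: "linear vT"
  by (rule linearI) (simp_all add: vec_eq_iff)
lemma linear_vT': "linear vT'"
  by (rule linearI) (simp_all add: vec_eq_iff)
lemma bl_vT: "bounded_linear vT" using linear_vT linear_conv_bounded_linear by blast
lemma bl_vT': "bounded_linear vT'" using linear_vT' linear_conv_bounded_linear by blast
lemma meas_vT [measurable]: "vT \<in> borel_measurable borel"
  by (intro borel_measurable_continuous_onI linear_continuous_on bl_vT)
lemma meas_vT' [measurable]: "vT' \<in> borel_measurable borel"
  by (intro borel_measurable_continuous_onI linear_continuous_on bl_vT')

lemma bij_Rep_wo: "bij Rep_wo"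
  by (metis Rep_wo_inverse Abs_wo_inverse UNIV_I bij_betw_byWitness subset_UNIV)

lemma prod_wo: "(\<Prod>i\<in>UNIV. f (Rep_wo i)) = (\<Prod>j\<in>(UNIV::'n::finite set). (f j :: real))"
  by (rule prod.reindex_bij_witness[where j = Rep_wo and i = Abs_wo])
     (auto simp: Abs_wo_inverse Rep_wo_inverse)

lemma distr_vT': "distr lborel lborel vT' = (lborel :: (real^'n::finite) measure)"
proof (rule lborel_eqI[symmetric])
  fix l u :: "real^'n"
  assume le: "\<And>b. b \<in> Basis \<Longrightarrow> l \<bullet> b \<le> u \<bullet> b"
  then have le': "l $ i \<le> u $ i" for i
    using le[of "axis i 1"] by (simp add: cart_eq_inner_axis)
  have "vT' -` box l u = box (vT l) (vT u)"
  proof (intro set_eqI iffI)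
    fix x assume "x \<in> vT' -` box l u"
    then have "\<forall>j. l $ j < x $ Abs_wo j \<and> x $ Abs_wo j < u $ j" by (simp add: mem_box_cart)
    then have "\<forall>i. l $ Rep_wo i < x $ i \<and> x $ i < u $ Rep_wo i" by (metis Rep_wo_inverse)
    then show "x \<in> box (vT l) (vT u)" by (simp add: mem_box_cart)
  next
    fix x assume "x \<in> box (vT l) (vT u)"
    then have "\<forall>i. l $ Rep_wo i < x $ i \<and> x $ i < u $ Rep_wo i" by (simp add: mem_box_cart)
    then have "\<forall>j. l $ j < x $ Abs_wo j \<and> x $ Abs_wo j < u $ j" by (metis Abs_wo_inverse UNIV_I)
    then show "x \<in> vT' -` box l u" by (simp add: mem_box_cart)
  qed
  then have "emeasure (distr lborel lborel vT') (box l u) = emeasure lborel (box (vT l) (vT u))"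
    by (simp add: emeasure_distr)
  also have "\<dots> = (\<Prod>b\<in>Basis. (vT u - vT l) \<bullet> b)"
    by (rule emeasure_lborel_box) (auto simp: Basis_vec_def inner_axis le')
  also have "\<dots> = (\<Prod>b\<in>Basis. (u - l) \<bullet> b)"
    by (simp add: prod_Basis_cart prod_wo[of "\<lambda>j. u $ j - l $ j"])
  finally show "emeasure (distr lborel lborel vT') (box l u) = (\<Prod>b\<in>Basis. (u - l) \<bullet> b)" .
qed simp



lemma sign_conj:
  fixes r :: "'m::finite \<Rightarrow> 'n::finite"
  assumes "bij r" "p permutes (UNIV :: 'm set)"
  shows "sign (\<lambda>x. r (p (inv r x))) = sign p"
proof -
  interpret permutes_bij_finite p "UNIV::'m set" "UNIV :: 'n set" r "inv r" "\<lambda>x. r (p (inv r x))"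
    by unfold_locales (use assms in \<open>auto simp: bij_is_inj\<close>)
  show ?thesis using sign_p' by simp
qed

lemma permutes_conj:
  fixes r :: "'m::finite \<Rightarrow> 'n::finite"
  assumes "bij r" "p permutes (UNIV :: 'm set)"
  shows "(\<lambda>x. r (p (inv r x))) permutes (UNIV :: 'n set)"
proof -
  interpret permutes_bij_finite p "UNIV::'m set" "UNIV :: 'n set" r "inv r" "\<lambda>x. r (p (inv r x))"
    by unfold_locales (use assms in \<open>auto simp: bij_is_inj\<close>)
  show ?thesis using permutes_p' by simp
qed

lemma det_reindex:
  fixes A :: "'a::comm_ring_1^'n::finite^'n" and r :: "'m::finite \<Rightarrow> 'n"
  assumes r: "bij r"
  shows "det (\<chi> i j. A $ r i $ r j) = det A"
proof -
  have ir: "bij (inv r)" using r by (simp add: bij_imp_bij_inv)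
  have rinv[simp]: "r (inv r x) = x" for x using r by (meson bij_inv_eq_iff)
  have invr[simp]: "inv r (r x) = x" for x using r by (simp add: bij_is_inj)
  have "det (\<chi> i j. A $ r i $ r j) =
    (\<Sum>p\<in>{p. p permutes (UNIV::'m set)}. of_int (sign p) * (\<Prod>i\<in>UNIV. A $ r i $ r (p i)))"
    unfolding det_def by simp
  also have "\<dots> = (\<Sum>q\<in>{q. q permutes (UNIV::'n set)}. of_int (sign q) * (\<Prod>k\<in>UNIV. A $ k $ q k))"
  proof (rule sum.reindex_bij_witness[where i = "\<lambda>q x. inv r (q (r x))" and j = "\<lambda>p x. r (p (inv r x))"])
    fix p assume p: "p \<in> {p. p permutes (UNIV::'m set)}"
    show "(\<lambda>x. inv r (r (p (inv r (r x))))) = p" by simp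
    show "(\<lambda>x. r (p (inv r x))) \<in> {q. q permutes (UNIV::'n set)}"
      using permutes_conj[OF r] p by simp
    have "(\<Prod>i\<in>UNIV. A $ r i $ r (p i)) = (\<Prod>k\<in>UNIV. A $ k $ r (p (inv r k)))"
      by (rule prod.reindex_bij_witness[where j = r and i = "inv r"]) auto
    then show "of_int (sign (\<lambda>x. r (p (inv r x)))) * (\<Prod>k\<in>UNIV. A $ k $ r (p (inv r k))) =
      of_int (sign p) * (\<Prod>i\<in>UNIV. A $ r i $ r (p i))"
      using sign_conj[OF r] p by simp
  next
    fix q assume q: "q \<in> {q. q permutes (UNIV::'n set)}"
    show "(\<lambda>x. r (inv r (q (r (inv r x))))) = q" by simp
    have "(\<lambda>x. inv r (q (inv (inv r) x))) permutes (UNIV :: 'm set)"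
      using permutes_conj[OF ir] q by simp
    moreover have "inv (inv r) = r" using r by (simp add: inv_inv_eq)
    ultimately show "(\<lambda>x. inv r (q (r x))) \<in> {p. p permutes (UNIV::'m set)}" by simp
  qed
  also have "\<dots> = det A" unfolding det_def by simp
  finally show ?thesis .
qed



lemma cov_wo:
  fixes F :: "real^'m::{finite,wellorder} \<Rightarrow> real" and \<Phi> h :: "real^'m::_ \<Rightarrow> real^'m::_"
    and M N :: "real^'m::_ \<Rightarrow> real^'m::_^'m::_"
  assumes d\<Phi>: "\<And>x. (\<Phi> has_derivative (\<lambda>v. M x *v v)) (at x)"
    and dh: "\<And>y. (h has_derivative (\<lambda>v. N y *v v)) (at y)"
    and h\<Phi>: "\<And>x. h (\<Phi> x) = x" and \<Phi>h: "\<And>y. \<Phi> (h y) = y"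
    and NM: "\<And>y. N y ** M (h y) = mat 1"
    and int: "integrable lborel (\<lambda>x. \<bar>det (M x)\<bar> * F (\<Phi> x))"
    and Fm: "F \<in> borel_measurable borel"
  shows "integrable lborel F \<and> integral\<^sup>L lborel F = integral\<^sup>L lborel (\<lambda>x. \<bar>det (M x)\<bar> * F (\<Phi> x))"
proof -
  let ?G = "\<lambda>x. \<bar>det (M x)\<bar> * F (\<Phi> x)"
  let ?b = "integral\<^sup>L lborel ?G"
  have Gm: "?G \<in> borel_measurable borel" using int by (simp add: borel_measurable_integrable)
  have Gl: "integrable lebesgue ?G" using int Gm by (simp add: integrable_completion)
  have GA: "?G absolutely_integrable_on UNIV" using Gl by (simp add: set_integrable_def)
  have "integral UNIV ?G = (LINT x:UNIV|lebesgue. ?G x)"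
    using set_lebesgue_integral_eq_integral(2)[OF GA] by simp
  also have "\<dots> = ?b" using Gm by (simp add: set_lebesgue_integral_def integral_completion)
  finally have GI: "integral UNIV ?G = ?b" .
  have mat: "matrix (\<lambda>v. M x *v v) = M x" for x by (simp add: matrix_of_matrix_vector_mul)
  have "(\<lambda>x. \<bar>det (matrix ((\<lambda>x v. M x *v v) x))\<bar> * F (\<Phi> x)) absolutely_integrable_on UNIV \<and>
           integral UNIV (\<lambda>x. \<bar>det (matrix ((\<lambda>x v. M x *v v) x))\<bar> * F (\<Phi> x)) = ?b \<longleftrightarrow>
         F absolutely_integrable_on UNIV \<and> integral UNIV F = ?b"
  proof (rule cov_invertible_real[where h = h and h' = "\<lambda>y v. N y *v v"])
    show "(\<Phi> has_derivative (\<lambda>v. M x *v v)) (at x within UNIV)" for x using d\<Phi> by simp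
    show "(h has_derivative (\<lambda>v. N y *v v)) (at y within UNIV)" for y using dh by simp
    show "\<Phi> x \<in> UNIV \<and> h (\<Phi> x) = x" for x using h\<Phi> by simp
    show "h y \<in> UNIV \<and> \<Phi> (h y) = y" for y using \<Phi>h by simp
    show "(\<lambda>v. N y *v v) \<circ> (\<lambda>v. M (h y) *v v) = id" for y
      by (auto simp: matrix_vector_mul_assoc NM)
  qed
  then have FA: "F absolutely_integrable_on UNIV" and FI: "integral UNIV F = ?b"
    using GA GI by (simp_all add: mat)
  have Fl: "integrable lebesgue F" using FA by (simp add: set_integrable_def)
  then have Fb: "integrable lborel F" using Fm by (simp add: integrable_completion)
  have "integral UNIV F = (LINT x:UNIV|lebesgue. F x)"
    using set_lebesgue_integral_eq_integral(2)[OF FA] by simp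
  also have "\<dots> = integral\<^sup>L lborel F" using Fm by (simp add: set_lebesgue_integral_def integral_completion)
  finally show ?thesis using FI Fb by simp
qed

definition mT :: "real^'n::finite^'n \<Rightarrow> real^('n wo)^('n wo)" where
  "mT A = (\<chi> i j. A $ Rep_wo i $ Rep_wo j)"

lemma sum_wo: "(\<Sum>i\<in>UNIV. f (Rep_wo i)) = (\<Sum>j\<in>(UNIV::'n::finite set). (f j :: real))"
  by (rule sum.reindex_bij_witness[where j = Rep_wo and i = Abs_wo])
     (auto simp: Abs_wo_inverse Rep_wo_inverse)

lemma mT_mult: "vT (A *v vT' v) = mT A *v v"
proof -
  have "(\<Sum>j\<in>UNIV. A $ Rep_wo i $ j * v $ Abs_wo j) = (\<Sum>k\<in>UNIV. A $ Rep_wo i $ Rep_wo k * v $ k)" for i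
    using sum_wo[of "\<lambda>j. A $ Rep_wo i $ j * v $ Abs_wo j"] by (simp add: Rep_wo_inverse)
  then show ?thesis by (simp add: vec_eq_iff matrix_vector_mult_def mT_def)
qed

lemma mT_mmult: "mT (A ** B) = mT A ** mT B"
  by (simp add: vec_eq_iff matrix_matrix_mult_def mT_def sum_wo[of "\<lambda>k. A $ _ $ k * B $ k $ _"])

lemma mT_one: "mT (mat 1) = mat 1"
  by (simp add: vec_eq_iff mat_def mT_def Rep_wo_inject)

lemma det_mT: "det (mT A) = det A"
  unfolding mT_def by (rule det_reindex[OF bij_Rep_wo])

lemma cov_gen:
  fixes F :: "real^'n::finite \<Rightarrow> real" and \<Phi> h :: "real^'n \<Rightarrow> real^'n"
    and M N :: "real^'n \<Rightarrow> real^'n^'n"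
  assumes d\<Phi>: "\<And>x. (\<Phi> has_derivative (\<lambda>v. M x *v v)) (at x)"
    and dh: "\<And>y. (h has_derivative (\<lambda>v. N y *v v)) (at y)"
    and h\<Phi>: "\<And>x. h (\<Phi> x) = x" and \<Phi>h: "\<And>y. \<Phi> (h y) = y"
    and NM: "\<And>y. N y ** M (h y) = mat 1"
    and int: "integrable lborel (\<lambda>x. \<bar>det (M x)\<bar> * F (\<Phi> x))"
    and Fm: "F \<in> borel_measurable borel"
  shows "integrable lborel F \<and> integral\<^sup>L lborel F = integral\<^sup>L lborel (\<lambda>x. \<bar>det (M x)\<bar> * F (\<Phi> x))"
proof -
  let ?G = "\<lambda>x. \<bar>det (M x)\<bar> * F (\<Phi> x)"
  define \<Phi>2 where "\<Phi>2 = (\<lambda>y. vT (\<Phi> (vT' y)))"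
  define h2 where "h2 = (\<lambda>y. vT (h (vT' y)))"
  define M2 where "M2 = (\<lambda>y. mT (M (vT' y)))"
  define N2 where "N2 = (\<lambda>y. mT (N (vT' y)))"
  define F2 where "F2 = (\<lambda>y. F (vT' y))"
  have Gm: "?G \<in> borel_measurable borel" using int by (simp add: borel_measurable_integrable)
  have d2: "(\<Phi>2 has_derivative (\<lambda>v. M2 y *v v)) (at y)" for y
  proof -
    have "((\<lambda>y. vT (\<Phi> (vT' y))) has_derivative (\<lambda>v. vT (M (vT' y) *v vT' v))) (at y)"
      by (rule has_derivative_compose[OF has_derivative_compose[OF bounded_linear_imp_has_derivative[OF bl_vT'] d\<Phi>]
          bounded_linear_imp_has_derivative[OF bl_vT]])
    then show ?thesis by (simp add: \<Phi>2_def M2_def mT_mult)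
  qed
  have dh2: "(h2 has_derivative (\<lambda>v. N2 y *v v)) (at y)" for y
  proof -
    have "((\<lambda>y. vT (h (vT' y))) has_derivative (\<lambda>v. vT (N (vT' y) *v vT' v))) (at y)"
      by (rule has_derivative_compose[OF has_derivative_compose[OF bounded_linear_imp_has_derivative[OF bl_vT'] dh]
          bounded_linear_imp_has_derivative[OF bl_vT]])
    then show ?thesis by (simp add: h2_def N2_def mT_mult)
  qed
  have "integrable (distr lborel lborel vT') ?G" using int by (simp add: distr_vT')
  then have "integrable lborel (\<lambda>y. ?G (vT' y))" using Gm by (simp add: integrable_distr_eq)
  then have int2: "integrable lborel (\<lambda>y. \<bar>det (M2 y)\<bar> * F2 (\<Phi>2 y))"
    by (simp add: M2_def F2_def \<Phi>2_def det_mT)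
  have "integrable lborel F2 \<and> integral\<^sup>L lborel F2 = integral\<^sup>L lborel (\<lambda>y. \<bar>det (M2 y)\<bar> * F2 (\<Phi>2 y))"
  proof (rule cov_wo[OF d2 dh2 _ _ _ int2])
    show "h2 (\<Phi>2 x) = x" for x by (simp add: h2_def \<Phi>2_def h\<Phi>)
    show "\<Phi>2 (h2 y) = y" for y by (simp add: h2_def \<Phi>2_def \<Phi>h)
    show "N2 y ** M2 (h2 y) = mat 1" for y by (simp add: N2_def M2_def h2_def mT_mmult[symmetric] NM mT_one)
    show "F2 \<in> borel_measurable borel" unfolding F2_def using Fm by measurable
  qed
  then have I2: "integrable lborel (\<lambda>y. F (vT' y))"
    and E2: "integral\<^sup>L lborel (\<lambda>y. F (vT' y)) = integral\<^sup>L lborel (\<lambda>y. ?G (vT' y))"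
    by (simp_all add: M2_def F2_def \<Phi>2_def det_mT)
  have "integrable (distr lborel lborel vT') F" using I2 Fm by (simp add: integrable_distr_eq)
  then have "integrable lborel F" by (simp add: distr_vT')
  moreover have "integral\<^sup>L lborel F = integral\<^sup>L lborel ?G"
  proof -
    have "integral\<^sup>L lborel F = integral\<^sup>L (distr lborel lborel vT') F" by (simp add: distr_vT')
    also have "\<dots> = integral\<^sup>L lborel (\<lambda>y. F (vT' y))" using Fm by (simp add: integral_distr)
    also have "\<dots> = integral\<^sup>L lborel (\<lambda>y. ?G (vT' y))" by (rule E2)
    also have "\<dots> = integral\<^sup>L (distr lborel lborel vT') ?G" using Gm by (simp add: integral_distr)
    also have "\<dots> = integral\<^sup>L lborel ?G" by (simp add: distr_vT')
    finally show ?thesis .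
  qed
  ultimately show ?thesis by simp
qed



lemma line_deriv:
  fixes F :: "'a::real_normed_vector \<Rightarrow> real"
  assumes "(F has_derivative F') (at (x + t *\<^sub>R v))"
  shows "((\<lambda>s. F (x + s *\<^sub>R v)) has_real_derivative F' v) (at t)"
proof -
  have l: "((\<lambda>s. x + s *\<^sub>R v) has_derivative (\<lambda>s. s *\<^sub>R v)) (at t)"
    by (auto intro!: derivative_eq_intros)
  have D: "((\<lambda>s. F (x + s *\<^sub>R v)) has_derivative (\<lambda>s. F' (s *\<^sub>R v))) (at t)"
    using has_derivative_compose[OF l assms] by simp
  have e: "(\<lambda>s. F' (s *\<^sub>R v)) = (*) (F' v)"
  proof
    fix s
    have "linear F'" using assms has_derivative_linear by blast
    then show "F' (s *\<^sub>R v) = F' v * s" by (simp add: linear_scale mult.commute)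
  qed
  from D have "((\<lambda>s. F (x + s *\<^sub>R v)) has_derivative (*) (F' v)) (at t)" by (simp only: e)
  then show ?thesis by (simp add: has_field_derivative_def)
qed

lemma mv_axis: "(A *v axis j (1::real)) $ i = A $ i $ j"
  by (simp add: matrix_vector_mult_def axis_def if_distrib cong: if_cong)

lemma entry_dist: "\<bar>A $ i $ j - B $ i $ j\<bar> \<le> dist A (B :: real^'n::finite^'m::finite)"
proof -
  have "\<bar>(A - B) $ i $ j\<bar> \<le> norm ((A - B) $ i)" by (rule component_le_norm_cart)
  also have "\<dots> \<le> norm (A - B)" by (rule Finite_Cartesian_Product.norm_nth_le)
  finally show ?thesis by (simp add: dist_norm)
qed

locale cvx_setup =
  fixes f :: "real^'n::finite \<Rightarrow> real" and g :: "real^'n \<Rightarrow> real^'n" and H :: "real^'n \<Rightarrow> real^'n^'n"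
  assumes cvx: "convex_on UNIV f"
    and df: "\<And>x. (f has_derivative (\<lambda>h. g x \<bullet> h)) (at x)"
    and dg: "\<And>x. (g has_derivative (\<lambda>h. H x *v h)) (at x)"
    and cH: "continuous_on UNIV H"
begin

lemma tangent: "f x + g x \<bullet> (z - x) \<le> f z"
proof (rule ccontr)
  assume "\<not> ?thesis"
  then have pos: "0 < g x \<bullet> (z - x) - (f z - f x)" by simp
  define \<psi> where "\<psi> = (\<lambda>s. f (x + s *\<^sub>R (z - x)) - s * (f z - f x))"
  have "((\<lambda>s. f (x + s *\<^sub>R (z - x))) has_real_derivative g x \<bullet> (z - x)) (at 0)"
    using line_deriv[of f "\<lambda>h. g x \<bullet> h" x 0 "z - x"] df by simp
  then have "(\<psi> has_real_derivative g x \<bullet> (z - x) - (f z - f x)) (at 0)"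
    unfolding \<psi>_def by (auto intro!: derivative_eq_intros)
  from DERIV_pos_inc_right[OF this pos] obtain d where d: "d > 0" "\<And>h. h > 0 \<Longrightarrow> h < d \<Longrightarrow> \<psi> 0 < \<psi> (0 + h)"
    by blast
  define h where "h = min (d/2) (1/2)"
  have h: "h > 0" "h < d" "h \<le> 1" using d by (auto simp: h_def)
  have "\<psi> 0 < \<psi> h" using d(2)[OF h(1,2)] by simp
  then have "f x + h * (f z - f x) < f (x + h *\<^sub>R (z - x))" by (simp add: \<psi>_def)
  moreover have "f ((1 - h) *\<^sub>R x + h *\<^sub>R z) \<le> (1 - h) * f x + h * f z"
    using convex_onD[OF cvx, of h x z] h by simp
  moreover have "(1 - h) *\<^sub>R x + h *\<^sub>R z = x + h *\<^sub>R (z - x)" by (simp add: algebra_simps)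
  ultimately show False by (simp add: algebra_simps)
qed

lemma monotone: "0 \<le> (g y - g x) \<bullet> (y - x)"
  using tangent[of x y] tangent[of y x] by (simp add: inner_diff_left inner_diff_right inner_commute)

lemma psd: "0 \<le> (H x *v v) \<bullet> v"
proof (rule ccontr)
  assume "\<not> ?thesis"
  then have neg: "(H x *v v) \<bullet> v < 0" by simp
  have "((\<lambda>y. g y \<bullet> v) has_derivative (\<lambda>h. (H x *v h) \<bullet> v)) (at (x + 0 *\<^sub>R v))"
    using dg[of x] by (auto intro!: derivative_eq_intros)
  from line_deriv[OF this]
  have "((\<lambda>s. g (x + s *\<^sub>R v) \<bullet> v) has_real_derivative (H x *v v) \<bullet> v) (at 0)" .
  from DERIV_neg_dec_right[OF this neg] obtain d where
    d: "d > 0" "\<And>h. h > 0 \<Longrightarrow> h < d \<Longrightarrow> g (x + 0 *\<^sub>R v) \<bullet> v > g (x + (0 + h) *\<^sub>R v) \<bullet> v" by blast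
  have "g x \<bullet> v > g (x + (d/2) *\<^sub>R v) \<bullet> v" using d(2)[of "d/2"] d(1) by simp
  then have "(g (x + (d/2) *\<^sub>R v) - g x) \<bullet> ((d/2) *\<^sub>R v) < 0"
    using d(1) by (simp add: inner_diff_left mult_pos_neg)
  moreover have "0 \<le> (g (x + (d/2) *\<^sub>R v) - g x) \<bullet> ((x + (d/2) *\<^sub>R v) - x)" by (rule monotone)
  ultimately show False by simp
qed

lemma inj_Phi_dist: "norm (x - y) \<le> norm ((x + g x) - (y + g y))"
proof -
  have "norm (x - y) ^ 2 = (x - y) \<bullet> (x - y)" by (simp add: power2_norm_eq_inner)
  also have "\<dots> \<le> ((x + g x) - (y + g y)) \<bullet> (x - y)"
  proof -
    have eq: "(x + g x) - (y + g y) = (x - y) + (g x - g y)" by (simp add: algebra_simps)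
    show ?thesis unfolding eq inner_add_left using monotone[of x y] by linarith
  qed
  also have "\<dots> \<le> norm ((x + g x) - (y + g y)) * norm (x - y)" by (rule norm_cauchy_schwarz)
  finally have "norm (x - y) ^ 2 \<le> norm ((x + g x) - (y + g y)) * norm (x - y)" .
  then show ?thesis
    by (metis mult_le_cancel_right norm_ge_zero order_le_less power2_eq_square zero_less_mult_iff
        dual_order.trans mult_eq_0_iff)
qed

lemma subgrad_g: "subgrad f x (g x)"
  unfolding subgrad_def using tangent by simp


lemma surj_Phi: "\<exists>x. x + g x = u"
proof -
  define \<psi> where "\<psi> = (\<lambda>x. f x + (x \<bullet> x) / 2 - u \<bullet> x)"
  have d\<psi>: "(\<psi> has_derivative (\<lambda>h. g x \<bullet> h + (h \<bullet> x + x \<bullet> h) / 2 - u \<bullet> h)) (at x)" for x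
    unfolding \<psi>_def by (auto intro!: derivative_eq_intros df)
  have c\<psi>: "continuous_on UNIV \<psi>"
    using d\<psi> by (meson has_derivative_continuous continuous_at_imp_continuous_on)
  define c where "c = norm (g 0) + norm u"
  define R where "R = 2 * c + 1"
  have far: "\<psi> 0 < \<psi> y" if "norm y > R" for y
  proof -
    have t: "f 0 + g 0 \<bullet> y \<le> f y" using tangent[of 0 y] by simp
    have "g 0 \<bullet> y \<ge> - (norm (g 0) * norm y)" using Cauchy_Schwarz_ineq2[of "g 0" y] by linarith
    moreover have "u \<bullet> y \<le> norm u * norm y" using norm_cauchy_schwarz[of u y] by simp
    moreover have "y \<bullet> y = norm y * norm y" by (simp add: power2_eq_square[symmetric] power2_norm_eq_inner)
    ultimately have "\<psi> y \<ge> f 0 + norm y * (norm y / 2 - c)"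
      using t unfolding \<psi>_def c_def by (simp add: algebra_simps)
    moreover have "norm y * (norm y / 2 - c) > 0"
    proof (rule mult_pos_pos)
      have "c \<ge> 0" unfolding c_def by simp
      then show "norm y > 0" "norm y / 2 - c > 0" using that unfolding R_def by linarith+
    qed
    ultimately show ?thesis by (simp add: \<psi>_def)
  qed
  obtain x0 where x0: "x0 \<in> cball 0 R" "\<And>y. y \<in> cball 0 R \<Longrightarrow> \<psi> x0 \<le> \<psi> y"
    using continuous_attains_inf[of "cball 0 R" \<psi>] c\<psi> R_def c_def
    by (metis compact_cball cball_eq_empty continuous_on_subset top_greatest not_less norm_ge_zero add_nonneg_nonneg
        mult_nonneg_nonneg zero_le_numeral zero_le_one)
  have "0 \<in> cball (0::real^'n) R" unfolding R_def c_def by simp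
  then have glob: "\<psi> x0 \<le> \<psi> y" for y
  proof (cases "norm y > R")
    case True
    then show ?thesis using x0(2)[OF \<open>0 \<in> cball 0 R\<close>] far[OF True] by linarith
  next
    case False
    then have "y \<in> cball 0 R" by (simp add: dist_norm)
    then show ?thesis using x0(2) by blast
  qed
  have "(\<lambda>h. g x0 \<bullet> h + (h \<bullet> x0 + x0 \<bullet> h) / 2 - u \<bullet> h) = (\<lambda>h. 0)"
    by (rule has_derivative_local_min[OF d\<psi>]) (simp add: glob)
  then have "g x0 \<bullet> w + (w \<bullet> x0 + x0 \<bullet> w) / 2 - u \<bullet> w = 0" for w by meson
  from this[of "g x0 + x0 - u"] have "(g x0 + x0 - u) \<bullet> (g x0 + x0 - u) = 0"
    by (simp add: inner_add_left inner_diff_left inner_commute)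
  then have "g x0 + x0 - u = 0" by (simp only: inner_eq_zero_iff)
  then have "x0 + g x0 = u" by (simp add: algebra_simps)
  then show ?thesis by blast
qed

lemma subgrad_unique:
  assumes "subgrad f a (u - a)" "subgrad f b (u - b)" shows "a = b"
proof -
  have 1: "f a + (u - a) \<bullet> (b - a) \<le> f b" using assms(1) unfolding subgrad_def by blast
  have 2: "f b + (u - b) \<bullet> (a - b) \<le> f a" using assms(2) unfolding subgrad_def by blast
  have "(b - a) \<bullet> (b - a) = (u - a) \<bullet> (b - a) + (u - b) \<bullet> (a - b)"
    by (simp add: inner_diff_left inner_diff_right inner_commute algebra_simps)
  then have "(b - a) \<bullet> (b - a) \<le> 0" using 1 2 by linarith
  then have "b - a = 0" by (metis inner_eq_zero_iff inner_ge_zero order_antisym)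
  then show ?thesis by simp
qed

lemma resolv_Phi: "resolv f (x + g x) = x"
  unfolding resolv_def
proof (rule the_equality)
  show "subgrad f x (x + g x - x)" using subgrad_g by simp
  show "y = x" if "subgrad f y (x + g x - y)" for y
    using subgrad_unique[OF that, of x] subgrad_g[of x] by simp
qed

lemma Phi_resolv: "resolv f u + g (resolv f u) = u"
  using surj_Phi[of u] resolv_Phi by auto

lemma resolv_cont: "continuous_on UNIV (resolv f)"
proof -
  have "1-lipschitz_on UNIV (resolv f)"
  proof (rule lipschitz_onI)
    fix u v :: "real^'n"
    show "dist (resolv f u) (resolv f v) \<le> 1 * dist u v"
      using inj_Phi_dist[of "resolv f u" "resolv f v"] by (simp add: Phi_resolv dist_norm)
  qed simp
  then show ?thesis by (rule lipschitz_on_continuous_on)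
qed

definition M where "M x = mat 1 + H x"

lemma dPhi: "((\<lambda>x. x + g x) has_derivative (\<lambda>h. M x *v h)) (at x)"
proof -
  have "((\<lambda>x. x + g x) has_derivative (\<lambda>h. h + H x *v h)) (at x)"
    by (auto intro!: derivative_eq_intros dg)
  moreover have "(\<lambda>h. h + H x *v h) = (\<lambda>h. M x *v h)"
    by (simp add: M_def matrix_vector_mult_add_rdistrib)
  ultimately show ?thesis by simp
qed

lemma inv_tH: assumes "t \<ge> 0" shows "invertible (mat 1 + t *\<^sub>R H x)"
proof -
  have "v = 0" if "(mat 1 + t *\<^sub>R H x) *v v = 0" for v
  proof -
    have "v + t *\<^sub>R (H x *v v) = 0" using that
      by (simp add: matrix_vector_mult_add_rdistrib scaleR_matrix_vector_assoc)
    then have "(v + t *\<^sub>R (H x *v v)) \<bullet> v = 0" by simp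
    then have "v \<bullet> v + t * ((H x *v v) \<bullet> v) = 0" by (simp add: inner_add_left)
    moreover have "t * ((H x *v v) \<bullet> v) \<ge> 0" using psd assms by simp
    ultimately have "v \<bullet> v \<le> 0" by linarith
    then show ?thesis by (metis inner_eq_zero_iff inner_ge_zero order_antisym)
  qed
  then show ?thesis by (simp add: invertible_left_inverse matrix_left_invertible_ker)
qed

lemma det_M_pos: "det (M x) > 0"
proof (rule ccontr)
  assume neg: "\<not> det (M x) > 0"
  define D where "D = (\<lambda>t::real. det (mat 1 + t *\<^sub>R H x))"
  have cD: "continuous_on {0..1} D"
    unfolding D_def det_def
    by (auto simp: mat_def intro!: continuous_intros)
  have "D 1 \<le> 0" "0 \<le> D 0" using neg by (auto simp: D_def M_def)
  from IVT2'[of D 1 0 0, OF this _ cD] obtain t where "0 \<le> t" "D t = 0" by auto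
  with inv_tH[of t x] show False by (simp add: D_def invertible_det_nz)
qed



lemma mixed:
  assumes s: "s > 0"
  shows "\<exists>p. norm (p - x) < 2 * s \<and>
    f (x + s *\<^sub>R axis j 1 + s *\<^sub>R axis i 1) - f (x + s *\<^sub>R axis j 1) - f (x + s *\<^sub>R axis i 1) + f x
      = s * s * H p $ i $ j"
proof -
  let ?ei = "axis i (1::real)" and ?ej = "axis j (1::real)"
  define a where "a = (\<lambda>t. f (x + s *\<^sub>R ?ej + t *\<^sub>R ?ei) - f (x + t *\<^sub>R ?ei))"
  have da: "(a has_real_derivative (g (x + s *\<^sub>R ?ej + t *\<^sub>R ?ei) $ i - g (x + t *\<^sub>R ?ei) $ i)) (at t)" for t
  proof -
    have 1: "((\<lambda>t. f (x + s *\<^sub>R ?ej + t *\<^sub>R ?ei)) has_real_derivative g (x + s *\<^sub>R ?ej + t *\<^sub>R ?ei) \<bullet> ?ei) (at t)"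
      by (rule line_deriv) (rule df)
    have 2: "((\<lambda>t. f (x + t *\<^sub>R ?ei)) has_real_derivative g (x + t *\<^sub>R ?ei) \<bullet> ?ei) (at t)"
      by (rule line_deriv) (rule df)
    show ?thesis using DERIV_diff[OF 1 2] unfolding a_def by (simp add: inner_axis)
  qed
  obtain \<xi> where \<xi>: "0 < \<xi>" "\<xi> < s"
    "a s - a 0 = (s - 0) * (g (x + s *\<^sub>R ?ej + \<xi> *\<^sub>R ?ei) $ i - g (x + \<xi> *\<^sub>R ?ei) $ i)"
    using MVT2[OF s, of a "\<lambda>t. g (x + s *\<^sub>R ?ej + t *\<^sub>R ?ei) $ i - g (x + t *\<^sub>R ?ei) $ i"] da by blast
  define b where "b = (\<lambda>r. g (x + \<xi> *\<^sub>R ?ei + r *\<^sub>R ?ej) \<bullet> ?ei)"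
  have db: "(b has_real_derivative H (x + \<xi> *\<^sub>R ?ei + r *\<^sub>R ?ej) $ i $ j) (at r)" for r
  proof -
    have "((\<lambda>y. g y \<bullet> ?ei) has_derivative (\<lambda>h. (H (x + \<xi> *\<^sub>R ?ei + r *\<^sub>R ?ej) *v h) \<bullet> ?ei))
        (at (x + \<xi> *\<^sub>R ?ei + r *\<^sub>R ?ej))"
      using dg by (auto intro!: derivative_eq_intros)
    from line_deriv[OF this] show ?thesis unfolding b_def
      by (simp add: inner_axis mv_axis)
  qed
  obtain \<eta> where \<eta>: "0 < \<eta>" "\<eta> < s"
    "b s - b 0 = (s - 0) * H (x + \<xi> *\<^sub>R ?ei + \<eta> *\<^sub>R ?ej) $ i $ j"
    using MVT2[OF s, of b "\<lambda>r. H (x + \<xi> *\<^sub>R ?ei + r *\<^sub>R ?ej) $ i $ j"] db by blast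
  define p where "p = x + \<xi> *\<^sub>R ?ei + \<eta> *\<^sub>R ?ej"
  have "norm (p - x) \<le> norm (\<xi> *\<^sub>R ?ei) + norm (\<eta> *\<^sub>R ?ej)"
    unfolding p_def by (metis add_diff_cancel_left' add.assoc norm_triangle_ineq)
  also have "\<dots> = \<xi> + \<eta>" using \<xi> \<eta> by simp
  finally have np: "norm (p - x) < 2 * s" using \<xi> \<eta> by simp
  have eq: "x + s *\<^sub>R ?ej + \<xi> *\<^sub>R ?ei = x + \<xi> *\<^sub>R ?ei + s *\<^sub>R ?ej" by (simp add: algebra_simps)
  have "g (x + s *\<^sub>R ?ej + \<xi> *\<^sub>R ?ei) $ i - g (x + \<xi> *\<^sub>R ?ei) $ i = b s - b 0"
    unfolding b_def eq by (simp add: inner_axis)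
  then have c1: "a s - a 0 = s * (s * H p $ i $ j)" using \<xi>(3) \<eta>(3) by (simp add: p_def)
  have c2: "a s - a 0 = f (x + s *\<^sub>R ?ej + s *\<^sub>R ?ei) - f (x + s *\<^sub>R ?ej) - f (x + s *\<^sub>R ?ei) + f x"
    unfolding a_def by simp
  have "f (x + s *\<^sub>R ?ej + s *\<^sub>R ?ei) - f (x + s *\<^sub>R ?ej) - f (x + s *\<^sub>R ?ei) + f x = s * s * H p $ i $ j"
    using c1 c2 by (simp add: mult.assoc)
  then show ?thesis using np by blast
qed

lemma H_sym: "H x $ i $ j = H x $ j $ i"
proof -
  have "\<bar>H x $ i $ j - H x $ j $ i\<bar> < 2 * e" if e: "e > 0" for e
  proof -
    have "isCont H x" using cH by (simp add: continuous_on_eq_continuous_at)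
    then obtain d where d: "d > 0" "\<And>y. dist y x < d \<Longrightarrow> dist (H y) (H x) < e"
      using e unfolding continuous_at_eps_delta by blast
    define s where "s = d / 2"
    have s: "s > 0" "2 * s \<le> d" using d by (auto simp: s_def)
    let ?D = "f (x + s *\<^sub>R axis j 1 + s *\<^sub>R axis i 1) - f (x + s *\<^sub>R axis j 1) - f (x + s *\<^sub>R axis i 1) + f x"
    obtain p where p: "norm (p - x) < 2 * s" "?D = s * s * H p $ i $ j" using mixed[OF s(1), where x=x and i=i and j=j] by blast
    obtain q where q: "norm (q - x) < 2 * s"
      "f (x + s *\<^sub>R axis i 1 + s *\<^sub>R axis j 1) - f (x + s *\<^sub>R axis i 1) - f (x + s *\<^sub>R axis j 1) + f x
        = s * s * H q $ j $ i" using mixed[OF s(1), where x=x and i=j and j=i] by blast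
    have eq: "x + s *\<^sub>R axis i 1 + s *\<^sub>R axis j 1 = x + s *\<^sub>R axis j 1 + s *\<^sub>R axis i 1"
      by (simp add: algebra_simps)
    have "s * s * H p $ i $ j = s * s * H q $ j $ i" using p(2) q(2)[unfolded eq] by linarith
    then have pq: "H p $ i $ j = H q $ j $ i" using s by simp
    have "dist (H p) (H x) < e" using d(2)[of p] p(1) s by (simp add: dist_norm)
    then have 1: "\<bar>H p $ i $ j - H x $ i $ j\<bar> < e"
      using entry_dist[of "H p" i j "H x"] by linarith
    have "dist (H q) (H x) < e" using d(2)[of q] q(1) s by (simp add: dist_norm)
    then have 2: "\<bar>H q $ j $ i - H x $ j $ i\<bar> < e"
      using entry_dist[of "H q" j i "H x"] by linarith
    show ?thesis using 1 2 pq by linarith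
  qed
  note * = this
  show ?thesis
  proof (rule ccontr)
    assume "H x $ i $ j \<noteq> H x $ j $ i"
    then have "\<bar>H x $ i $ j - H x $ j $ i\<bar> > 0" by simp
    from *[OF half_gt_zero[OF this]] show False by simp
  qed
qed


definition Minv where "Minv x = (SOME B. B ** M x = mat 1)"

lemma Minv_left: "Minv x ** M x = mat 1"
proof -
  have "invertible (M x)" using inv_tH[of 1 x] by (simp add: M_def)
  then have "\<exists>B. B ** M x = mat 1" by (simp add: invertible_left_inverse)
  then show ?thesis unfolding Minv_def by (rule someI_ex)
qed

lemma Minv_right: "M x ** Minv x = mat 1"
  using Minv_left matrix_left_right_inverse by blast

lemma det_Minv: "det (Minv x) * det (M x) = 1"
  using det_mul[of "Minv x" "M x"] Minv_left[of x] by simp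

lemma dJ: "(resolv f has_derivative (\<lambda>h. Minv (resolv f u) *v h)) (at u)"
proof (rule has_derivative_inverse_basic[where f = "\<lambda>x. x + g x" and f' = "\<lambda>h. M (resolv f u) *v h" and T = UNIV])
  show "((\<lambda>x. x + g x) has_derivative (*v) (M (resolv f u))) (at (resolv f u))" by (rule dPhi)
  show "bounded_linear ((*v) (Minv (resolv f u)))" by simp
  show "(*v) (Minv (resolv f u)) \<circ> (*v) (M (resolv f u)) = id"
    by (rule ext) (simp add: matrix_vector_mul_assoc Minv_left)
  show "continuous (at u) (resolv f)"
    using resolv_cont by (simp add: continuous_on_eq_continuous_at)
  show "\<And>z. z \<in> UNIV \<Longrightarrow> resolv f z + g (resolv f z) = z" by (rule Phi_resolv)
qed auto

lemma jac: "jac_ae (resolv f) u = Minv (resolv f u)"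
proof -
  have "resolv f differentiable (at u)" using dJ by (rule differentiableI)
  then show ?thesis
    unfolding jac_ae_def jacobian_def frechet_derivative_at[OF dJ[of u], symmetric]
    by (simp add: matrix_of_matrix_vector_mul)
qed

lemma IminusMinv: "(mat 1 - Minv x) *v v = H x *v (Minv x *v v)"
proof -
  have "M x *v (Minv x *v v) = v" by (simp add: matrix_vector_mul_assoc Minv_right)
  then have "Minv x *v v + H x *v (Minv x *v v) = v"
    by (simp add: M_def matrix_vector_mult_add_rdistrib)
  then show ?thesis by (simp add: matrix_vector_mult_diff_rdistrib algebra_simps)
qed

end



lemma mv_axis': "(A *v axis j (1::real)) $ i = A $ i $ j"
  by (simp add: matrix_vector_mult_def axis_def if_distrib cong: if_cong)

lemma sum_axis: "(\<Sum>i\<in>UNIV. f i * axis c (1::'a::comm_ring_1) $ i) = f c"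
proof -
  have "(\<Sum>i\<in>UNIV. f i * axis c (1::'a) $ i) = (\<Sum>i\<in>UNIV. if i = c then f i else 0)"
    by (rule sum.cong) (auto simp: axis_def)
  then show ?thesis by simp
qed

lemma sum_axis2: "(\<Sum>i\<in>UNIV. axis c (1::'a::comm_ring_1) $ i * f i) = f c"
proof -
  have "(\<Sum>i\<in>UNIV. axis c (1::'a) $ i * f i) = (\<Sum>i\<in>UNIV. if i = c then f i else 0)"
    by (rule sum.cong) (auto simp: axis_def)
  then show ?thesis by simp
qed

lemma sum_axis_comp: "(\<Sum>d\<in>UNIV. A $ d $ c *\<^sub>R axis d (1::real)) $ i = A $ i $ c"
proof -
  have "(\<Sum>d\<in>UNIV. A $ d $ c *\<^sub>R axis d (1::real)) $ i = (\<Sum>d\<in>UNIV. A $ d $ c * axis d 1 $ i)"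
    by (simp add: sum_component)
  also have "\<dots> = (\<Sum>d\<in>UNIV. if d = i then A $ d $ c else 0)"
    by (rule sum.cong) (auto simp: axis_def)
  finally show ?thesis by simp
qed

lemma wedge_lin:
  fixes \<alpha> :: "'n::finite \<Rightarrow> 'v::real_vector \<Rightarrow> real" and Mt :: "real^'n^'n"
  assumes lin: "\<And>a. linear (\<alpha> a)"
  shows "wedge1 \<alpha> (\<lambda>b. \<Sum>d\<in>UNIV. Mt $ d $ b *\<^sub>R v d) = det Mt * wedge1 \<alpha> v"
proof -
  have "(\<chi> a b. \<alpha> a (\<Sum>d\<in>UNIV. Mt $ d $ b *\<^sub>R v d)) = (\<chi> a d. \<alpha> a (v d)) ** Mt"
    by (simp add: vec_eq_iff matrix_matrix_mult_def linear_sum[OF lin] linear_scale[OF lin] mult.commute)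
  then show ?thesis unfolding wedge1_def by (simp add: det_mul mult.commute)
qed

lemma vm: "(axis c 1 v* (\<chi> i j. complex_of_real (H $ i $ j))) $ k = complex_of_real (H $ c $ k)"
  for H :: "real^'n::finite^'n"
  unfolding vector_matrix_mult_def using sum_axis2[of c "\<lambda>i. (\<chi> i j. complex_of_real (H $ i $ j)) $ i $ k"] by simp
lemma Im0a: "(\<chi> j. Im (fst (axis c (1::complex), axis c 1 v* (\<chi> i j. complex_of_real (H $ i $ j))) $ j)) = (0::real^'n::finite)"
  for H :: "real^'n::finite^'n"
  by (simp add: vec_eq_iff axis_def)
lemma Im0b: "(\<chi> j. Im (snd (axis c (1::complex), axis c 1 v* (\<chi> i j. complex_of_real (H $ i $ j))) $ j)) = (0::real^'n::finite)"
  for H :: "real^'n::finite^'n"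
  by (simp add: vec_eq_iff vm)
lemma Re1a: "(\<chi> j. Re (fst (axis c (1::complex), axis c 1 v* (\<chi> i j. complex_of_real (H $ i $ j))) $ j)) = (axis c 1::real^'n::finite)"
  for H :: "real^'n::finite^'n"
  by (simp add: vec_eq_iff axis_def)
lemma Re1b: assumes sym: "\<And>i j. H $ i $ j = H $ j $ i"
  shows "(\<chi> j. Re (snd (axis c (1::complex), axis c 1 v* (\<chi> i j. complex_of_real (H $ i $ j))) $ j)) = H *v axis c 1"
proof -
  have "Re (snd (axis c (1::complex), axis c 1 v* (\<chi> i j. complex_of_real (H $ i $ j))) $ k) = (H *v axis c 1) $ k" for k
    by (simp add: vm mv_axis' sym[of c k])
  then show ?thesis by (simp add: vec_eq_iff)
qed

lemma tuple_decomp: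
  fixes A H :: "real^'n::finite^'n"
  shows "(A *v axis c 1, H *v (A *v axis c 1)) = (\<Sum>d\<in>UNIV. A $ d $ c *\<^sub>R (axis d 1, H *v axis d 1))"
proof -
  have 1: "A *v axis c 1 = (\<Sum>d\<in>UNIV. A $ d $ c *\<^sub>R axis d 1)"
    unfolding vec_eq_iff mv_axis' sum_axis_comp by simp
  have 2: "H *v (\<Sum>d\<in>UNIV. A $ d $ c *\<^sub>R axis d 1) = (\<Sum>d\<in>UNIV. A $ d $ c *\<^sub>R (H *v axis d (1::real)))"
    by (simp only: linear_sum[OF matrix_vector_mul_linear[of H]] linear_scale[OF matrix_vector_mul_linear[of H]])
  show ?thesis by (simp add: prod_eq_iff fst_sum snd_sum 1 2)
qed

lemma tau_transform:
  fixes A H :: "real^'n::finite^'n" and \<tau> :: "'n form"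
  assumes tau: "\<tau> = (\<lambda>v. \<Sum>j\<in>F. c j * complex_of_real (wedge1 (\<alpha> j) v))"
    and lin: "\<And>j a. j \<in> F \<Longrightarrow> linear (\<alpha> j a)"
  shows "\<tau> (\<lambda>c. (A *v axis c 1, H *v (A *v axis c 1))) = complex_of_real (det A) * \<tau> (\<lambda>c. (axis c 1, H *v axis c 1))"
proof -
  have "wedge1 (\<alpha> j) (\<lambda>c. (A *v axis c 1, H *v (A *v axis c 1))) = det A * wedge1 (\<alpha> j) (\<lambda>c. (axis c 1, H *v axis c 1))"
    if "j \<in> F" for j
    unfolding tuple_decomp by (rule wedge_lin[OF lin[OF that]])
  then show ?thesis unfolding tau by (simp add: sum_distrib_left mult.assoc mult.left_commute)
qed

lemma P_tau_real:
  fixes H :: "real^'n::finite^'n" and \<tau> :: "'n form"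
  assumes tau: "\<tau> = (\<lambda>v. \<Sum>j\<in>F. c j * complex_of_real (wedge1 (\<alpha> j) v))"
    and lin: "\<And>j a. j \<in> F \<Longrightarrow> linear (\<alpha> j a)"
    and sym: "\<And>i j. H $ i $ j = H $ j $ i"
  shows "P_tau \<tau> (\<chi> i j. complex_of_real (H $ i $ j)) = \<tau> (\<lambda>c. (axis c 1, H *v axis c 1))"
proof -
  let ?Q = "\<chi> i j. complex_of_real (H $ i $ j)"
  let ?w = "\<lambda>c. (axis c (1::complex), axis c 1 v* ?Q)"
  have Im0: "(\<chi> j. Im (fst (?w c) $ j)) = 0" "(\<chi> j. Im (snd (?w c) $ j)) = 0" for c
    by (rule Im0a) (rule Im0b)
  have Re1: "(\<chi> j. Re (fst (?w c) $ j)) = axis c 1" "(\<chi> j. Re (snd (?w c) $ j)) = H *v axis c 1" for c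
    by (rule Re1a) (rule Re1b[OF sym])
  have zero: "\<tau> (\<lambda>c. if c \<in> S then (0, 0) else (axis c 1, H *v axis c 1)) = 0" if ne: "S \<noteq> {}" for S
  proof -
    obtain c0 where c0: "c0 \<in> S" using ne by blast
    have "wedge1 (\<alpha> j) (\<lambda>c. if c \<in> S then (0, 0) else (axis c 1, H *v axis c 1)) = 0" if j: "j \<in> F" for j
    proof -
      have "column c0 (\<chi> a b. \<alpha> j a (if b \<in> S then (0, 0) else (axis b 1, H *v axis b 1))) = 0"
      proof -
        have z: "\<alpha> j a (0, 0) = 0" for a using linear_0[OF lin[OF j]] by (simp add: zero_prod_def)
        show ?thesis by (simp add: column_def vec_eq_iff c0 z)
      qed
      then show ?thesis unfolding wedge1_def by (rule det_zero_column)
    qed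
    then show ?thesis unfolding tau by simp
  qed
  have "P_tau \<tau> ?Q = (\<Sum>S\<in>(UNIV :: 'n set set). \<i> ^ card S *
      \<tau> (\<lambda>c. if c \<in> S then (0, 0) else (axis c 1, H *v axis c 1)))"
    unfolding P_tau_def form_C_def
  proof (rule sum.cong[OF refl])
    fix S :: "'n set"
    have "(\<lambda>c. if c \<in> S then ((\<chi> j. Im (fst (?w c) $ j)), (\<chi> j. Im (snd (?w c) $ j)))
               else ((\<chi> j. Re (fst (?w c) $ j)), (\<chi> j. Re (snd (?w c) $ j)))) =
          (\<lambda>c. if c \<in> S then (0, 0) else (axis c 1, H *v axis c 1))"
      by (rule ext) (simp only: Im0 Re1)
    then show "\<i> ^ card S * \<tau> (\<lambda>c. if c \<in> S then ((\<chi> j. Im (fst (?w c) $ j)), (\<chi> j. Im (snd (?w c) $ j)))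
               else ((\<chi> j. Re (fst (?w c) $ j)), (\<chi> j. Re (snd (?w c) $ j)))) =
      \<i> ^ card S * \<tau> (\<lambda>c. if c \<in> S then (0, 0) else (axis c 1, H *v axis c 1))"
      by (rule arg_cong)
  qed
  also have "\<dots> = (\<Sum>S\<in>(UNIV :: 'n set set). if S = {} then \<tau> (\<lambda>c. (axis c 1, H *v axis c 1)) else 0)"
  proof (rule sum.cong)
    fix S :: "'n set"
    show "\<i> ^ card S * \<tau> (\<lambda>c. if c \<in> S then (0, 0) else (axis c 1, H *v axis c 1)) =
      (if S = {} then \<tau> (\<lambda>c. (axis c 1, H *v axis c 1)) else 0)"
    proof (cases "S = {}")
      case True then show ?thesis by simp
    next
      case False then show ?thesis using zero[OF False] by simp
    qed
  qed simp
  also have "\<dots> = \<tau> (\<lambda>c. (axis c 1, H *v axis c 1))" by simp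
  finally show ?thesis .
qed

lemma bideg_linear: "bideg_family k \<alpha> \<Longrightarrow> linear (\<alpha> a)"
  unfolding bideg_family_def xcov_def ycov_def by blast

lemma PLambda_repr:
  fixes \<tau> :: "'n::finite form"
  assumes "PLambda k \<tau>"
  shows "\<exists>(F::nat set) c \<alpha>. finite F \<and> \<tau> = (\<lambda>v. \<Sum>j\<in>F. c j * complex_of_real (wedge1 (\<alpha> j) v))
     \<and> (\<forall>j\<in>F. \<forall>a. linear (\<alpha> j a))"
  using assms unfolding PLambda_def
  apply (elim exE conjE)
  subgoal for F c \<alpha>
    apply (rule exI[of _ F])
    apply (rule exI[of _ c])
    apply (rule exI[of _ \<alpha>])
    by (auto intro: bideg_linear)
  done



lemma cont_det:
  fixes D :: "'a::topological_space \<Rightarrow> real^'n::finite^'n"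
  assumes "\<And>i j. continuous_on S (\<lambda>x. D x $ i $ j)"
  shows "continuous_on S (\<lambda>x. det (D x))"
  unfolding det_def by (intro continuous_intros assms)

theorem proposition6p17:
  fixes f :: "real^'n::finite \<Rightarrow> real" and g :: "real^'n \<Rightarrow> real^'n"
    and H :: "real^'n \<Rightarrow> real^'n^'n" and \<tau> :: "'n form" and k :: nat
  assumes "PLambda k \<tau>"
    and "convex_on UNIV f"
    and "\<And>x. (f has_derivative (\<lambda>h. g x \<bullet> h)) (at x)"
    and "\<And>x. (g has_derivative (\<lambda>h. H x *v h)) (at x)"
    and "continuous_on UNIV H"
  shows "\<forall>B. B \<in> sets borel \<and> bounded B \<longrightarrow>
    Psi \<tau> f B = integral\<^sup>L lborel (\<lambda>x. indicator B x *
                   P_tau \<tau> (\<chi> i j. complex_of_real (H x $ i $ j)))"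
proof (intro allI impI)
  fix B :: "(real^'n) set"
  assume B: "B \<in> sets borel \<and> bounded B"
  interpret cvx_setup f g H
    by unfold_locales (rule assms(2), rule assms(3), rule assms(4), rule assms(5))
  obtain F :: "nat set" and c \<alpha> where Fr: "finite F" "\<tau> = (\<lambda>v. \<Sum>j\<in>F. c j * complex_of_real (wedge1 (\<alpha> j) v))"
     "\<forall>j\<in>F. \<forall>a. linear (\<alpha> j a)"
    using PLambda_repr[OF assms(1)] by blast
  have lin: "\<And>j a. j \<in> F \<Longrightarrow> linear (\<alpha> j a)" using Fr(3) by blast
  define Pr where "Pr = (\<lambda>x. \<tau> (\<lambda>c. (axis c 1, H x *v axis c 1)))"
  define R where "R = (\<lambda>x. indicator B x * Pr x)"
  define L where "L = (\<lambda>u. complex_of_real (1 / det (M (resolv f u))) * R (resolv f u))"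
  have RHS: "(\<lambda>x. indicator B x * P_tau \<tau> (\<chi> i j. complex_of_real (H x $ i $ j))) = R"
  proof
    fix x
    have "P_tau \<tau> (\<chi> i j. complex_of_real (H x $ i $ j)) = Pr x"
      unfolding Pr_def by (rule P_tau_real[OF Fr(2) lin H_sym])
    then show "indicator B x * P_tau \<tau> (\<chi> i j. complex_of_real (H x $ i $ j)) = R x"
      by (simp add: R_def)
  qed
  have LHS: "Psi \<tau> f B = integral\<^sup>L lborel L"
  proof -
    have "indicator B (resolv f u) * \<tau> (\<lambda>c. (jac_ae (resolv f) u *v axis c 1,
        (mat 1 - jac_ae (resolv f) u) *v axis c 1)) = L u" for u
    proof -
      let ?x = "resolv f u"
      have "\<tau> (\<lambda>c. (jac_ae (resolv f) u *v axis c 1, (mat 1 - jac_ae (resolv f) u) *v axis c 1))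
          = \<tau> (\<lambda>c. (Minv ?x *v axis c 1, H ?x *v (Minv ?x *v axis c 1)))"
        by (simp add: jac IminusMinv)
      also have "\<dots> = complex_of_real (det (Minv ?x)) * Pr ?x"
        unfolding Pr_def by (rule tau_transform[OF Fr(2) lin])
      also have "det (Minv ?x) = 1 / det (M ?x)"
        using det_Minv[of ?x] det_M_pos[of ?x] by (simp add: field_simps)
      finally show ?thesis by (simp add: L_def R_def mult.left_commute)
    qed
    then show ?thesis unfolding Psi_def Dcycle_def by simp
  qed
  have cM: "continuous_on UNIV (\<lambda>x. det (M x))"
  proof (rule cont_det)
    fix i j
    have "continuous_on UNIV (\<lambda>x. mat 1 $ i $ j + H x $ i $ j)"
      by (intro continuous_intros assms(5))
    then show "continuous_on UNIV (\<lambda>x. M x $ i $ j)" by (simp add: M_def)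
  qed
  have cPr: "continuous_on UNIV Pr"
  proof -
    have col: "continuous_on UNIV (\<lambda>x. (axis b 1, H x *v axis b (1::real)))" for b
    proof -
      have eq: "(\<lambda>x. H x *v axis b (1::real)) = (\<lambda>x. \<chi> i. H x $ i $ b)"
        by (rule ext) (simp add: vec_eq_iff mv_axis)
      have "continuous_on UNIV (\<lambda>x. \<chi> i. H x $ i $ b)"
        by (intro continuous_intros assms(5))
      then have "continuous_on UNIV (\<lambda>x. H x *v axis b (1::real))" unfolding eq .
      then show ?thesis by (intro continuous_intros)
    qed
    have ent: "continuous_on UNIV (\<lambda>x. \<alpha> j a (axis b 1, H x *v axis b 1))" if "j \<in> F" for j a b
    proof -
      have "bounded_linear (\<alpha> j a)" using lin[OF that] linear_conv_bounded_linear by blast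
      from linear_continuous_on[OF this] have "continuous_on UNIV (\<alpha> j a)" .
      from continuous_on_compose2[OF this col] show ?thesis by simp
    qed
    have "continuous_on UNIV (\<lambda>x. \<Sum>j\<in>F. c j * complex_of_real (wedge1 (\<alpha> j) (\<lambda>b. (axis b 1, H x *v axis b 1))))"
      unfolding wedge1_def
      by (intro continuous_intros cont_det) (simp add: ent)
    then show ?thesis unfolding Pr_def Fr(2) .
  qed
  have Bm: "B \<in> sets borel" and Bb: "bounded B" using B by auto
  have Rm: "R \<in> borel_measurable borel"
    unfolding R_def using Bm borel_measurable_continuous_onI[OF cPr] by measurable
  have Rint: "integrable lborel R"
  proof -
    obtain r :: real and z where r: "B \<subseteq> cball z r" using Bb bounded_subset_cball by blast
    have ic: "integrable lborel (\<lambda>x. indicator (cball z r) x *\<^sub>R Pr x)"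
      by (rule borel_integrable_compact) (auto intro: continuous_on_subset[OF cPr])
    then have "integrable lborel (\<lambda>x. indicator B x *\<^sub>R (indicator (cball z r) x *\<^sub>R Pr x))"
      using integrable_mult_indicator[OF _ ic, of B] Bm by simp
    moreover have "(\<lambda>x. indicator B x *\<^sub>R (indicator (cball z r) x *\<^sub>R Pr x)) = R"
    proof
      fix x
      show "indicator B x *\<^sub>R (indicator (cball z r) x *\<^sub>R Pr x) = R x"
        using r by (cases "x \<in> B") (auto simp: R_def indicator_def scaleR_conv_of_real)
    qed
    ultimately show ?thesis by simp
  qed
  have Jm: "resolv f \<in> borel_measurable borel"
    using resolv_cont by (rule borel_measurable_continuous_onI)
  have Mm: "(\<lambda>x. det (M x)) \<in> borel_measurable borel"
    using cM by (rule borel_measurable_continuous_onI)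
  have Lm: "L \<in> borel_measurable borel"
    unfolding L_def using Rm Jm Mm by measurable
  have NM: "Minv (resolv f y) ** M (resolv f y) = mat 1" for y by (rule Minv_left)
  have key: "\<bar>det (M x)\<bar> * T (L (x + g x)) = T (R x)" if T: "bounded_linear T" "\<And>r z. T (complex_of_real r * z) = r * T z" for T :: "complex \<Rightarrow> real" and x
  proof -
    have "L (x + g x) = complex_of_real (1 / det (M x)) * R x" by (simp add: L_def resolv_Phi)
    then have "T (L (x + g x)) = (1 / det (M x)) * T (R x)" by (simp only: T(2))
    then show ?thesis using det_M_pos[of x] by simp
  qed
  have ReL: "integrable lborel (\<lambda>u. Re (L u)) \<and> integral\<^sup>L lborel (\<lambda>u. Re (L u)) = Re (integral\<^sup>L lborel R)"
  proof -
    have eq: "(\<lambda>x. \<bar>det (M x)\<bar> * Re (L (x + g x))) = (\<lambda>x. Re (R x))"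
      using key[of Re] by (simp add: bounded_linear_Re)
    have "integrable lborel (\<lambda>u. Re (L u)) \<and> integral\<^sup>L lborel (\<lambda>u. Re (L u)) =
        integral\<^sup>L lborel (\<lambda>x. \<bar>det (M x)\<bar> * Re (L (x + g x)))"
    proof (rule cov_gen[OF dPhi dJ resolv_Phi Phi_resolv NM])
      show "integrable lborel (\<lambda>x. \<bar>det (M x)\<bar> * Re (L (x + g x)))" unfolding eq using Rint by simp
      show "(\<lambda>u. Re (L u)) \<in> borel_measurable borel" using Lm by measurable
    qed
    then show ?thesis unfolding eq using Rint by simp
  qed
  have ImL: "integrable lborel (\<lambda>u. Im (L u)) \<and> integral\<^sup>L lborel (\<lambda>u. Im (L u)) = Im (integral\<^sup>L lborel R)"
  proof -
    have eq: "(\<lambda>x. \<bar>det (M x)\<bar> * Im (L (x + g x))) = (\<lambda>x. Im (R x))"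
      using key[of Im] by (simp add: bounded_linear_Im)
    have "integrable lborel (\<lambda>u. Im (L u)) \<and> integral\<^sup>L lborel (\<lambda>u. Im (L u)) =
        integral\<^sup>L lborel (\<lambda>x. \<bar>det (M x)\<bar> * Im (L (x + g x)))"
    proof (rule cov_gen[OF dPhi dJ resolv_Phi Phi_resolv NM])
      show "integrable lborel (\<lambda>x. \<bar>det (M x)\<bar> * Im (L (x + g x)))" unfolding eq using Rint by simp
      show "(\<lambda>u. Im (L u)) \<in> borel_measurable borel" using Lm by measurable
    qed
    then show ?thesis unfolding eq using Rint by simp
  qed
  have Lint: "integrable lborel L"
  proof -
    have "integrable lborel (\<lambda>u. complex_of_real (Re (L u)) + \<i> * complex_of_real (Im (L u)))"
    proof (rule Bochner_Integration.integrable_add)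
      show "integrable lborel (\<lambda>u. complex_of_real (Re (L u)))"
        using ReL by (intro integrable_of_real) simp
      have "integrable lborel (\<lambda>u. complex_of_real (Im (L u)))"
        using ImL by (intro integrable_of_real) simp
      then show "integrable lborel (\<lambda>u. \<i> * complex_of_real (Im (L u)))"
        by (rule Bochner_Integration.integrable_mult_right)
    qed
    moreover have "(\<lambda>u. complex_of_real (Re (L u)) + \<i> * complex_of_real (Im (L u))) = L"
      by (simp add: complex_eq[symmetric])
    ultimately show ?thesis by simp
  qed
  have "integral\<^sup>L lborel L = integral\<^sup>L lborel R"
  proof (rule complex_eqI)
    show "Re (integral\<^sup>L lborel L) = Re (integral\<^sup>L lborel R)" using ReL Lint by simp
    show "Im (integral\<^sup>L lborel L) = Im (integral\<^sup>L lborel R)" using ImL Lint by simp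
  qed
  then show "Psi \<tau> f B = integral\<^sup>L lborel (\<lambda>x. indicator B x *
                   P_tau \<tau> (\<chi> i j. complex_of_real (H x $ i $ j)))"
    unfolding LHS RHS .
qed

end
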